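(* For every real $M\ge 0$ and positive integers $N$ and $K$, with $\mathcal{N}=\{1,\dots,N\}$, \[ R(M,N,K)\le 72\,\bar{R}(M,\mathcal{N},K). \]
   Context: Caching problem: a server holds $N$ files of $F$ bits each, connected through a shared error-free link to $K$ users each with a cache of $MF$ bits. In the placement phase each user stores an arbitrary function of the files of at most $MF$ bits; in the delivery phase each user requests a file, the server sends a message over the shared link, and each user must reconstruct its requested file from the message and its cache. The rate for a demand vector is message length divided by $F$. $\bar{R}(M,\mathcal{N},K)$ is the optimal expected rate (infimum over all schemes of the expected rate, achievable with vanishing error probability for all large $F$) when the $K$ demands are i.i.d. uniform over $\mathcal{N}$. The function $R$ is defined by $R(M,N,K)=(1-M/N)\min\{\tfrac{N}{M}(1-(1-M/N)^K),N\}$ for $M\in(0,N]$, $R(0,N,K)=\min\{N,K\}$, and $R(M,N,K)=0$ for $M>N$. *)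

theory Defs
  imports Main "HOL-Library.FuncSet" Complex_Main
begin

text \<open>The files are independent and uniformly distributed, i.e.
the file tuple is uniform over file_tuples Ns F.\<close>

definition file_tuples :: "nat set \<Rightarrow> nat \<Rightarrow> (nat \<Rightarrow> bool list) set" where
  "file_tuples Ns F = {W. (\<forall>n\<in>Ns. length (W n) = F) \<and> (\<forall>n. n \<notin> Ns \<longrightarrow> W n = [])}"

definition demands :: "nat set \<Rightarrow> nat \<Rightarrow> (nat \<Rightarrow> nat) set" where
  "demands Ns K = {0..<K} \<rightarrow>\<^sub>E Ns"

text \<open>A scheme with file size F bits consists of
  placement functions phi k (cache content of user k, a function of the files),
  message lengths L d, encoding functions psi d (message for demand d, a function of the files),
  and decoders mu d k (user k's estimate of its requested file from the message and its cache).\<close>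
definition valid_scheme ::
  "real \<Rightarrow> nat set \<Rightarrow> nat \<Rightarrow> nat \<Rightarrow>
   (nat \<Rightarrow> (nat \<Rightarrow> bool list) \<Rightarrow> bool list) \<Rightarrow>
   ((nat \<Rightarrow> nat) \<Rightarrow> nat) \<Rightarrow>
   ((nat \<Rightarrow> nat) \<Rightarrow> (nat \<Rightarrow> bool list) \<Rightarrow> bool list) \<Rightarrow> bool" where
  "valid_scheme M Ns K F phi L psi \<longleftrightarrow>
     (\<forall>k<K. \<forall>W\<in>file_tuples Ns F. real (length (phi k W)) \<le> M * real F) \<and>
     (\<forall>d\<in>demands Ns K. \<forall>W\<in>file_tuples Ns F. length (psi d W) = L d)"

definition err_prob ::
  "nat set \<Rightarrow> nat \<Rightarrow>
   (nat \<Rightarrow> (nat \<Rightarrow> bool list) \<Rightarrow> bool list) \<Rightarrow>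
   ((nat \<Rightarrow> nat) \<Rightarrow> (nat \<Rightarrow> bool list) \<Rightarrow> bool list) \<Rightarrow>
   ((nat \<Rightarrow> nat) \<Rightarrow> nat \<Rightarrow> bool list \<Rightarrow> bool list \<Rightarrow> bool list) \<Rightarrow>
   (nat \<Rightarrow> nat) \<Rightarrow> nat \<Rightarrow> real" where
  "err_prob Ns F phi psi mu d k =
     real (card {W\<in>file_tuples Ns F. mu d k (psi d W) (phi k W) \<noteq> W (d k)})
     / real (card (file_tuples Ns F))"

text \<open>Expected rate when the K demands are i.i.d. uniform over Ns.\<close>
definition expected_rate :: "nat set \<Rightarrow> nat \<Rightarrow> nat \<Rightarrow> ((nat \<Rightarrow> nat) \<Rightarrow> nat) \<Rightarrow> real" where
  "expected_rate Ns K F L =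
     (\<Sum>d\<in>demands Ns K. real (L d) / real F) / real (card (demands Ns K))"

definition achievable_exp_rate :: "real \<Rightarrow> nat set \<Rightarrow> nat \<Rightarrow> real \<Rightarrow> bool" where
  "achievable_exp_rate M Ns K r \<longleftrightarrow>
     (\<forall>\<epsilon>>0. \<exists>F0. \<forall>F\<ge>F0. \<exists>phi L psi mu.
        valid_scheme M Ns K F phi L psi \<and>
        (\<forall>d\<in>demands Ns K. \<forall>k<K. err_prob Ns F phi psi mu d k \<le> \<epsilon>) \<and>
        expected_rate Ns K F L \<le> r)"

definition Rbar :: "real \<Rightarrow> nat set \<Rightarrow> nat \<Rightarrow> real" where
  "Rbar M Ns K = Inf {r. achievable_exp_rate M Ns K r}"

definition Rfun :: "real \<Rightarrow> nat \<Rightarrow> nat \<Rightarrow> real" where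
  "Rfun M N K =
     (if M = 0 then min (real N) (real K)
      else if 0 < M \<and> M \<le> real N then
        (1 - M / real N) * min (real N / M * (1 - (1 - M / real N) ^ K)) (real N)
      else 0)"

end

theory Submission
  imports Defs
begin


lemma card_bool_lists_eq: "card {xs::bool list. length xs = n} = 2 ^ n"
  using card_lists_length_eq[of "UNIV::bool set" n] by simp

lemma finite_bool_lists_eq: "finite {xs::bool list. length xs = n}"
  using finite_lists_length_eq[of "UNIV::bool set" n] by simp

lemma card_bool_lists_le: "card {xs::bool list. length xs \<le> n} \<le> 2 ^ (n+1)"
proof -
  have "card {xs::bool list. length xs \<le> n} = (\<Sum>i\<le>n. 2^i)"
    using card_lists_length_le[of "UNIV::bool set" n] by simp
  also have "\<dots> \<le> 2^(n+1)"
  proof (induction n)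
    case 0 then show ?case by simp
  next
    case (Suc n)
    have "(\<Sum>i\<le>Suc n. (2::nat)^i) = (\<Sum>i\<le>n. 2^i) + 2^Suc n" by simp
    also have "\<dots> \<le> 2^(n+1) + 2^(Suc n)" using Suc by simp
    finally show ?case by simp
  qed
  finally show ?thesis .
qed

lemma finite_bool_lists_le: "finite {xs::bool list. length xs \<le> n}"
  using finite_lists_length_le[of "UNIV::bool set" n] by simp

lemma card_file_tuples:
  assumes "finite Ns"
  shows "card (file_tuples Ns F) = 2 ^ (card Ns * F)"
proof -
  have "bij_betw (\<lambda>W. restrict W Ns) (file_tuples Ns F) (PiE Ns (\<lambda>_. {xs::bool list. length xs = F}))"
  proof (rule bij_betw_byWitness[where f'="\<lambda>f n. if n \<in> Ns then f n else []"])
    show "\<forall>a\<in>file_tuples Ns F. (\<lambda>n. if n \<in> Ns then restrict a Ns n else []) = a"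
      by (auto simp: file_tuples_def fun_eq_iff)
    show "\<forall>a'\<in>Pi\<^sub>E Ns (\<lambda>_. {xs. length xs = F}). restrict (\<lambda>n. if n \<in> Ns then a' n else []) Ns = a'"
      by (auto simp: fun_eq_iff PiE_def extensional_def)
    show "(\<lambda>W. restrict W Ns) ` file_tuples Ns F \<subseteq> Pi\<^sub>E Ns (\<lambda>_. {xs. length xs = F})"
      by (auto simp: file_tuples_def)
    show "(\<lambda>f n. if n \<in> Ns then f n else []) ` Pi\<^sub>E Ns (\<lambda>_. {xs. length xs = F}) \<subseteq> file_tuples Ns F"
      by (auto simp: file_tuples_def)
  qed
  hence "card (file_tuples Ns F) = card (PiE Ns (\<lambda>_. {xs::bool list. length xs = F}))"
    by (rule bij_betw_same_card)
  also have "\<dots> = (2^F)^card Ns" using assms by (simp add: card_PiE card_bool_lists_eq)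
  finally show ?thesis by (simp add: power_mult mult.commute)
qed

lemma finite_file_tuples:
  assumes "finite Ns" shows "finite (file_tuples Ns F)"
  using card_file_tuples[OF assms, of F] card.infinite by fastforce



lemma core:
  fixes g :: "'i \<Rightarrow> nat \<Rightarrow> nat" and \<epsilon> :: real
  assumes finI: "finite I" and finNs: "finite Ns"
    and vs: "valid_scheme M Ns K F phi L psi"
    and gD: "\<And>i. i \<in> I \<Longrightarrow> g i \<in> demands Ns K"
    and SK: "S \<subseteq> {0..<K}"
    and err: "\<And>i k. i \<in> I \<Longrightarrow> k \<in> S \<Longrightarrow> err_prob Ns F phi psi mu (g i) k \<le> \<epsilon>"
    and eps: "2 * real (card I) * real (card S) * \<epsilon> \<le> 1"
  shows "card {g i k | i k. i \<in> I \<and> k \<in> S} * F \<le> (\<Sum>i\<in>I. L (g i)) + (nat \<lfloor>M * real F\<rfloor> + 1) * card S + 1"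
proof -
  define FT where "FT = file_tuples Ns F"
  define U where "U = {g i k | i k. i \<in> I \<and> k \<in> S}"
  define c where "c = nat \<lfloor>M * real F\<rfloor>"
  define N where "N = card Ns"
  have finS: "finite S" using SK finite_subset by blast
  have finFT: "finite FT" unfolding FT_def by (rule finite_file_tuples[OF finNs])
  have cardFT: "card FT = 2 ^ (N * F)" unfolding FT_def N_def by (rule card_file_tuples[OF finNs])
  have UNs: "U \<subseteq> Ns"
  proof
    fix n assume "n \<in> U"
    then obtain i k where "i \<in> I" "k \<in> S" "n = g i k" unfolding U_def by blast
    with gD[of i] SK show "n \<in> Ns" by (auto simp: demands_def PiE_def Pi_def)
  qed
  have finU: "finite U" using UNs finNs finite_subset by blast
  have cardU: "card U \<le> N" unfolding N_def using UNs finNs by (rule card_mono[rotated])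
  define Good where "Good = {W\<in>FT. \<forall>i\<in>I. \<forall>k\<in>S. mu (g i) k (psi (g i) W) (phi k W) = W (g i k)}"
  define Bad where "Bad = (\<lambda>(i,k). {W\<in>FT. mu (g i) k (psi (g i) W) (phi k W) \<noteq> W (g i k)})"
  have FTGood: "FT - Good = (\<Union>p\<in>I \<times> S. Bad p)"
    unfolding Good_def Bad_def by auto
  have "card (FT - Good) \<le> (\<Sum>p\<in>I \<times> S. card (Bad p))"
    unfolding FTGood by (rule card_UN_le) (use finI finS in auto)
  hence "real (card (FT - Good)) \<le> (\<Sum>p\<in>I \<times> S. real (card (Bad p)))"
    by (metis of_nat_le_iff of_nat_sum)
  also have "\<dots> \<le> (\<Sum>p\<in>I \<times> S. \<epsilon> * real (card FT))"
  proof (rule sum_mono)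
    fix p assume p: "p \<in> I \<times> S"
    obtain i k where pik: "p = (i,k)" "i \<in> I" "k \<in> S" using p by auto
    have pos: "real (card FT) > 0" using cardFT by simp
    have "real (card (Bad p)) / real (card FT) \<le> \<epsilon>"
      using err[OF pik(2,3)] unfolding err_prob_def Bad_def pik(1) FT_def by simp
    thus "real (card (Bad p)) \<le> \<epsilon> * real (card FT)" using pos by (simp add: divide_le_eq)
  qed
  also have "\<dots> = real (card I) * real (card S) * \<epsilon> * real (card FT)"
    by (simp add: card_cartesian_product)
  also have "\<dots> \<le> real (card FT) / 2"
  proof -
    have "real (card I) * real (card S) * \<epsilon> \<le> 1/2" using eps by simp
    from mult_right_mono[OF this, of "real (card FT)"] show ?thesis by simp
  qed
  finally have badle: "real (card (FT - Good)) \<le> real (card FT) / 2" .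
  have GoodFT: "Good \<subseteq> FT" unfolding Good_def by auto
  have "card FT = card Good + card (FT - Good)"
    using card_Diff_subset[OF finite_subset[OF GoodFT finFT] GoodFT] card_mono[OF finFT GoodFT] by simp
  with badle have Good1: "card FT \<le> 2 * card Good" by linarith
  define A where "A = PiE I (\<lambda>i. {xs::bool list. length xs = L (g i)})"
  define B where "B = PiE S (\<lambda>k. {xs::bool list. length xs \<le> c})"
  define C where "C = PiE (Ns - U) (\<lambda>n. {xs::bool list. length xs = F})"
  define \<Phi> where "\<Phi> = (\<lambda>W. (restrict (\<lambda>i. psi (g i) W) I, restrict (\<lambda>k. phi k W) S, restrict W (Ns - U)))"
  have img: "\<Phi> ` Good \<subseteq> A \<times> B \<times> C"
  proof
    fix x assume "x \<in> \<Phi> ` Good"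
    then obtain W where W: "W \<in> FT" "x = \<Phi> W" unfolding Good_def by auto
    have "restrict (\<lambda>i. psi (g i) W) I \<in> A"
      using vs gD W(1) unfolding A_def valid_scheme_def FT_def by auto
    moreover have "restrict (\<lambda>k. phi k W) S \<in> B"
    proof -
      { fix k assume "k \<in> S"
        hence "k < K" using SK by auto
        hence "real (length (phi k W)) \<le> M * real F" using vs W(1) unfolding valid_scheme_def FT_def by auto
        hence "length (phi k W) \<le> c" unfolding c_def by (rule le_nat_floor) }
      thus ?thesis unfolding B_def by auto
    qed
    moreover have "restrict W (Ns - U) \<in> C"
      using W(1) unfolding C_def FT_def file_tuples_def by auto
    ultimately show "x \<in> A \<times> B \<times> C" using W(2) unfolding \<Phi>_def by auto
  qed
  have inj: "inj_on \<Phi> Good"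
  proof (rule inj_onI)
    fix W W' assume WG: "W \<in> Good" "W' \<in> Good" and eq: "\<Phi> W = \<Phi> W'"
    have q1: "restrict (\<lambda>i. psi (g i) W) I = restrict (\<lambda>i. psi (g i) W') I"
      and q2: "restrict (\<lambda>k. phi k W) S = restrict (\<lambda>k. phi k W') S"
      and q3: "restrict W (Ns - U) = restrict W' (Ns - U)"
      using eq unfolding \<Phi>_def by simp_all
    have e1: "\<And>i. i \<in> I \<Longrightarrow> psi (g i) W = psi (g i) W'"
    proof -
      fix i assume "i \<in> I" thus "psi (g i) W = psi (g i) W'" using fun_cong[OF q1, of i] by simp
    qed
    have e2: "\<And>k. k \<in> S \<Longrightarrow> phi k W = phi k W'"
    proof -
      fix k assume "k \<in> S" thus "phi k W = phi k W'" using fun_cong[OF q2, of k] by simp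
    qed
    have e3: "\<And>n. n \<in> Ns - U \<Longrightarrow> W n = W' n"
    proof -
      fix n assume "n \<in> Ns - U" thus "W n = W' n" using fun_cong[OF q3, of n] by simp
    qed
    show "W = W'"
    proof
      fix n
      show "W n = W' n"
      proof (cases "n \<in> U")
        case True
        then obtain i k where ik: "i \<in> I" "k \<in> S" "n = g i k" unfolding U_def by blast
        have "W n = mu (g i) k (psi (g i) W) (phi k W)" using WG(1) ik unfolding Good_def by auto
        also have "\<dots> = mu (g i) k (psi (g i) W') (phi k W')" using e1 e2 ik by simp
        also have "\<dots> = W' n" using WG(2) ik unfolding Good_def by auto
        finally show ?thesis .
      next
        case False
        show ?thesis
        proof (cases "n \<in> Ns")
          case True with False e3 show ?thesis by auto
        next
          case False2: False
          have "W \<in> FT" "W' \<in> FT" using WG GoodFT by auto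
          then show ?thesis using False2 unfolding FT_def file_tuples_def by auto
        qed
      qed
    qed
  qed
  have finABC: "finite (A \<times> B \<times> C)"
    unfolding A_def B_def C_def
    by (intro finite_cartesian_product finite_PiE finI finS finite_Diff finNs
        finite_bool_lists_eq finite_bool_lists_le)
  have "card Good = card (\<Phi> ` Good)" using card_image[OF inj] by simp
  also have "\<dots> \<le> card (A \<times> B \<times> C)" by (rule card_mono[OF finABC img])
  also have "\<dots> = card A * card B * card C" by (simp add: card_cartesian_product)
  finally have G2: "card Good \<le> card A * card B * card C" .
  have cA: "card A = 2 ^ (\<Sum>i\<in>I. L (g i))"
    unfolding A_def using finI by (simp add: card_PiE card_bool_lists_eq power_sum)
  have cB: "card B \<le> 2 ^ ((c+1) * card S)"
  proof -
    have "card B = (\<Prod>k\<in>S. card {xs::bool list. length xs \<le> c})"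
      unfolding B_def using finS by (simp add: card_PiE)
    also have "\<dots> \<le> (\<Prod>k\<in>S. 2^(c+1))" by (rule prod_mono) (use card_bool_lists_le[of c] in simp)
    also have "\<dots> = 2 ^ ((c+1) * card S)" by (simp add: power_mult power_add mult.commute)
    finally show ?thesis .
  qed
  have cC: "card C = 2 ^ (F * (N - card U))"
  proof -
    have "card C = (2^F) ^ card (Ns - U)"
      unfolding C_def using finNs by (simp add: card_PiE card_bool_lists_eq)
    also have "card (Ns - U) = N - card U" unfolding N_def using card_Diff_subset[OF finU UNs] .
    finally show ?thesis by (simp add: power_mult)
  qed
  have "2 ^ (N * F) \<le> 2 * (card A * card B * card C)" using Good1 G2 cardFT by linarith
  also have "\<dots> \<le> 2 * (2 ^ (\<Sum>i\<in>I. L (g i)) * 2 ^ ((c+1) * card S) * 2 ^ (F * (N - card U)))"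
    using cA cB cC by (simp add: mult_right_mono)
  also have "\<dots> = 2 ^ ((\<Sum>i\<in>I. L (g i)) + (c+1) * card S + F * (N - card U) + 1)"
    by (simp add: power_add)
  finally have "N * F \<le> (\<Sum>i\<in>I. L (g i)) + (c+1) * card S + F * (N - card U) + 1"
    by (rule power_le_imp_le_exp[rotated]) simp
  moreover have "F * (N - card U) = N * F - card U * F" using cardU by (simp add: diff_mult_distrib2 mult.commute)
  moreover have "card U * F \<le> N * F" using cardU by simp
  ultimately have "card U * F \<le> (\<Sum>i\<in>I. L (g i)) + (c+1) * card S + 1" by linarith
  thus ?thesis unfolding U_def c_def .
qed



lemma lim_lemma:
  fixes a b r :: real
  assumes b: "b \<ge> 0" and h: "\<And>F. F \<ge> Fz \<Longrightarrow> F > 0 \<Longrightarrow> a - b / real F \<le> r"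
  shows "a \<le> r"
proof (rule ccontr)
  assume "\<not> a \<le> r"
  hence ar: "a - r > 0" by simp
  define F where "F = max (Suc Fz) (nat \<lceil>b / (a - r)\<rceil> + 1)"
  have F1: "F \<ge> Fz" "F > 0" unfolding F_def by auto
  have "real F \<ge> real (nat \<lceil>b / (a - r)\<rceil> + 1)" unfolding F_def by simp
  moreover have "real (nat \<lceil>b / (a - r)\<rceil>) \<ge> b / (a - r)" by (rule real_nat_ceiling_ge)
  ultimately have "real F > b / (a - r)" by simp
  hence "b < (a - r) * real F" using ar by (simp add: divide_less_eq mult.commute)
  hence "b / real F < a - r" using F1 by (simp add: divide_less_eq)
  with h[OF F1] show False by linarith
qed

lemma sum_PiE_coord:
  assumes finA: "finite A" and iA: "i \<in> A" and finD: "finite D"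
  shows "(\<Sum>\<tau>\<in>PiE A (\<lambda>_. D). f (\<tau> i)) = of_nat (card D ^ (card A - 1)) * (\<Sum>d\<in>D. (f d :: 'c::comm_semiring_1))"
proof -
  define A' where "A' = A - {i}"
  have AA: "A = insert i A'" "i \<notin> A'" using iA unfolding A'_def by auto
  have "(\<Sum>\<tau>\<in>PiE A (\<lambda>_. D). f (\<tau> i)) =
        (\<Sum>\<tau>\<in>(\<lambda>(y, g). g(i := y)) ` (D \<times> PiE A' (\<lambda>_. D)). f (\<tau> i))"
    unfolding AA(1) PiE_insert_eq ..
  also have "\<dots> = (\<Sum>p\<in>D \<times> PiE A' (\<lambda>_. D). f (((\<lambda>(y, g). g(i := y)) p) i))"
    by (rule sum.reindex[OF inj_combinator[OF AA(2)], unfolded comp_def])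
  also have "\<dots> = (\<Sum>p\<in>D \<times> PiE A' (\<lambda>_. D). f (fst p))"
    by (rule sum.cong) auto
  also have "\<dots> = (\<Sum>y\<in>D. \<Sum>g\<in>PiE A' (\<lambda>_. D). f y)"
  proof -
    have "(\<lambda>(y::'b, g::'a\<Rightarrow>'b). f y) = (\<lambda>p. f (fst p))" by (auto simp: fun_eq_iff)
    thus ?thesis using sum.cartesian_product[of "\<lambda>y g. f y" "PiE A' (\<lambda>_. D)" D] by simp
  qed
  also have "\<dots> = of_nat (card (PiE A' (\<lambda>_. D))) * (\<Sum>d\<in>D. f d)"
    by (simp add: sum_distrib_right mult.commute)
  also have "card (PiE A' (\<lambda>_. D)) = card D ^ (card A - 1)"
    using finA unfolding A'_def by (simp add: card_PiE iA)
  finally show ?thesis .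
qed

lemma demands_upd:
  assumes "d \<in> demands Ns K" "n \<in> Ns" "k < K"
  shows "d(k := n) \<in> demands Ns K"
  using assms unfolding demands_def by (auto simp: PiE_iff extensional_def)

lemma finite_demands: "finite Ns \<Longrightarrow> finite (demands Ns K)"
  unfolding demands_def by (intro finite_PiE) auto

lemma card_demands: "finite Ns \<Longrightarrow> card (demands Ns K) = card Ns ^ K"
  unfolding demands_def by (simp add: card_PiE)

lemma expected_rate_eq:
  "expected_rate Ns K F L = (\<Sum>d\<in>demands Ns K. real (L d)) / (real F * real (card (demands Ns K)))"
  unfolding expected_rate_def by (simp add: sum_divide_distrib[symmetric])

lemma nat_floor_le: "x \<ge> 0 \<Longrightarrow> real (nat \<lfloor>x\<rfloor>) \<le> x"
  by linarith

lemma caseI: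
  assumes ach: "achievable_exp_rate M {1..N} K r" and N: "N > 0" and K: "K > 0" and M: "M \<ge> 0"
  shows "(real N - M) / real N \<le> r"
proof -
  define Ns where "Ns = {1..N}"
  define D where "D = demands Ns K"
  have finNs: "finite Ns" and cNs: "card Ns = N" unfolding Ns_def by auto
  have finD: "finite D" unfolding D_def by (rule finite_demands[OF finNs])
  have cD: "card D > 0" unfolding D_def using card_demands[OF finNs, of K] cNs N by simp
  obtain F0 where F0: "\<forall>F\<ge>F0. \<exists>phi L psi mu. valid_scheme M Ns K F phi L psi \<and>
        (\<forall>d\<in>D. \<forall>k<K. err_prob Ns F phi psi mu d k \<le> 1 / (2 * real N)) \<and>
        expected_rate Ns K F L \<le> r"
  proof -
    have "1 / (2 * real N) > 0" using N by simp
    hence "\<exists>F0. \<forall>F\<ge>F0. \<exists>phi L psi mu. valid_scheme M Ns K F phi L psi \<and>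
        (\<forall>d\<in>D. \<forall>k<K. err_prob Ns F phi psi mu d k \<le> 1 / (2 * real N)) \<and>
        expected_rate Ns K F L \<le> r"
      using ach unfolding achievable_exp_rate_def Ns_def D_def by blast
    thus ?thesis using that by blast
  qed
  show ?thesis
  proof (rule lim_lemma[where b = "2 / real N" and Fz = F0])
    show "0 \<le> 2 / real N" by simp
    fix F :: nat assume FF0: "F \<ge> F0" and Fpos: "F > 0"
    obtain phi L psi mu where vs: "valid_scheme M Ns K F phi L psi"
      and err: "\<forall>d\<in>D. \<forall>k<K. err_prob Ns F phi psi mu d k \<le> 1 / (2 * real N)"
      and er: "expected_rate Ns K F L \<le> r"
      using F0 FF0 by blast
    have per: "real N * real F - M * real F - 2 \<le> (\<Sum>n\<in>Ns. real (L (d(0 := n))))" if dD: "d \<in> D" for d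
    proof -
      have c: "card {(d(0:=i)) k | i k. i \<in> Ns \<and> k \<in> {0}} * F
          \<le> (\<Sum>i\<in>Ns. L (d(0:=i))) + (nat \<lfloor>M * real F\<rfloor> + 1) * card {0::nat} + 1"
      proof (rule core[OF finNs finNs vs])
        show "\<And>i. i \<in> Ns \<Longrightarrow> d(0 := i) \<in> demands Ns K" using demands_upd dD K unfolding D_def by blast
        show "{0} \<subseteq> {0..<K}" using K by auto
        show "\<And>i k. i \<in> Ns \<Longrightarrow> k \<in> {0} \<Longrightarrow> err_prob Ns F phi psi mu (d(0 := i)) k \<le> 1 / (2 * real N)"
          using err demands_upd dD K unfolding D_def by auto
        show "2 * real (card Ns) * real (card {0::nat}) * (1 / (2 * real N)) \<le> 1" using cNs N by simp
      qed
      have U: "{(d(0:=i)) k | i k. i \<in> Ns \<and> k \<in> {0::nat}} = Ns" by auto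
      have c2: "N * F \<le> (\<Sum>i\<in>Ns. L (d(0:=i))) + (nat \<lfloor>M * real F\<rfloor> + 1) + 1"
        using c unfolding U cNs by simp
      have c3: "real (N * F) \<le> real ((\<Sum>i\<in>Ns. L (d(0:=i))) + (nat \<lfloor>M * real F\<rfloor> + 1) + 1)"
        using c2 by (simp only: of_nat_le_iff)
      have c4: "real ((\<Sum>i\<in>Ns. L (d(0:=i))) + (nat \<lfloor>M * real F\<rfloor> + 1) + 1)
          = (\<Sum>i\<in>Ns. real (L (d(0:=i)))) + real (nat \<lfloor>M * real F\<rfloor>) + 2"
        by (simp add: of_nat_sum)
      have "real N * real F \<le> (\<Sum>i\<in>Ns. real (L (d(0:=i)))) + real (nat \<lfloor>M * real F\<rfloor>) + 2"
        using c3 c4 by simp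
      moreover have "real (nat \<lfloor>M * real F\<rfloor>) \<le> M * real F" by (rule nat_floor_le) (use M in simp)
      ultimately show ?thesis by linarith
    qed
    have "real (card D) * (real N * real F - M * real F - 2) \<le> (\<Sum>d\<in>D. \<Sum>n\<in>Ns. real (L (d(0 := n))))"
      using sum_mono[of D "\<lambda>_. real N * real F - M * real F - 2", OF per] by simp
    also have "\<dots> = real N * (\<Sum>d\<in>D. real (L d))"
    proof -
      define h where "h = (\<lambda>(d::nat\<Rightarrow>nat, n::nat). (d(0:=n), d 0))"
      have bij: "bij_betw h (D \<times> Ns) (D \<times> Ns)"
      proof (rule bij_betw_byWitness[where f' = h])
        show "\<forall>a\<in>D \<times> Ns. h (h a) = a" unfolding h_def by auto
        show "\<forall>a\<in>D \<times> Ns. h (h a) = a" unfolding h_def by auto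
        show "h ` (D \<times> Ns) \<subseteq> D \<times> Ns"
        proof
          fix x assume "x \<in> h ` (D \<times> Ns)"
          then obtain d n where dn: "d \<in> D" "n \<in> Ns" "x = (d(0:=n), d 0)" unfolding h_def by auto
          have "d 0 \<in> Ns" using dn(1) K unfolding D_def demands_def by auto
          thus "x \<in> D \<times> Ns" using dn demands_upd K unfolding D_def by auto
        qed
        thus "h ` (D \<times> Ns) \<subseteq> D \<times> Ns" .
      qed
      have "(\<Sum>d\<in>D. \<Sum>n\<in>Ns. real (L (d(0 := n)))) = (\<Sum>p\<in>D \<times> Ns. real (L (fst (h p))))"
        by (simp add: sum.cartesian_product h_def case_prod_beta)
      also have "\<dots> = (\<Sum>p\<in>D \<times> Ns. real (L (fst p)))"
        by (rule sum.reindex_bij_betw[OF bij, of "\<lambda>p. real (L (fst p))"])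
      also have "\<dots> = (\<Sum>d\<in>D. \<Sum>n\<in>Ns. real (L d))"
      proof -
        have "(\<lambda>(d::nat\<Rightarrow>nat, n::nat). real (L d)) = (\<lambda>p. real (L (fst p)))" by (auto simp: fun_eq_iff)
        thus ?thesis using sum.cartesian_product[of "\<lambda>d n. real (L d)" Ns D] by simp
      qed
      also have "\<dots> = real N * (\<Sum>d\<in>D. real (L d))" using cNs by (simp add: sum_distrib_left)
      finally show ?thesis .
    qed
    finally have ineq: "real (card D) * (real N * real F - M * real F - 2) \<le> real N * (\<Sum>d\<in>D. real (L d))" .
    have "expected_rate Ns K F L = (\<Sum>d\<in>D. real (L d)) / (real F * real (card D))"
      unfolding expected_rate_eq D_def ..
    also have "\<dots> \<ge> (real N * real F - M * real F - 2) / (real N * real F)"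
    proof -
      have pos: "real F * real (card D) > 0" "real N * real F > 0" using Fpos cD N by auto
      have "(real N * real F - M * real F - 2) / (real N * real F)
          = (real (card D) * (real N * real F - M * real F - 2)) / (real (card D) * (real N * real F))"
        by (rule mult_divide_mult_cancel_left[symmetric]) (use cD in simp)
      also have "\<dots> \<le> (real N * (\<Sum>d\<in>D. real (L d))) / (real (card D) * (real N * real F))"
        by (rule divide_right_mono[OF ineq]) simp
      also have "real (card D) * (real N * real F) = real N * (real F * real (card D))" by simp
      also have "(real N * (\<Sum>d\<in>D. real (L d))) / (real N * (real F * real (card D))) = (\<Sum>d\<in>D. real (L d)) / (real F * real (card D))"
        by (rule mult_divide_mult_cancel_left) (use N in simp)
      finally show ?thesis .
    qed
    moreover have "(real N * real F - M * real F - 2) / (real N * real F) = (real N - M) / real N - 2 / real N / real F"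
      using Fpos N by (simp add: field_simps)
    ultimately show "(real N - M) / real N - 2 / real N / real F \<le> r" using er by linarith
  qed
qed



lemma pow_bound:
  fixes y :: real assumes "0 \<le> y" "y \<le> 1"
  shows "(1 - y) ^ x \<le> 1 - real x * y + (real x * y)^2 / 2"
proof (induction x)
  case 0 then show ?case by simp
next
  case (Suc x)
  have "(1 - y) ^ Suc x = (1 - y) * (1 - y) ^ x" by simp
  also have "\<dots> \<le> (1 - y) * (1 - real x * y + (real x * y)^2 / 2)"
    using Suc assms by (intro mult_left_mono) auto
  also have "\<dots> \<le> 1 - real (Suc x) * y + (real (Suc x) * y)^2 / 2"
  proof -
    have "0 \<le> y^2 / 2 + (real x)^2 * y^3 / 2" using assms by simp
    thus ?thesis by (simp add: algebra_simps power2_eq_square power3_eq_cube)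
  qed
  finally show ?case .
qed

lemma prod_split:
  assumes "s \<le> K"
  shows "(\<Prod>k\<in>{0..<K}. if k < s then a else b) = a ^ s * (b::nat) ^ (K - s)"
proof -
  have e: "{0..<K} = {0..<s} \<union> {s..<K}" using assms by auto
  have "(\<Prod>k\<in>{0..<K}. if k < s then a else b) = (\<Prod>k\<in>{0..<s}. if k < s then a else b) * (\<Prod>k\<in>{s..<K}. if k < s then a else b)"
    unfolding e by (rule prod.union_disjoint) auto
  also have "(\<Prod>k\<in>{0..<s}. if k < s then a else b) = a ^ s" by simp
  also have "(\<Prod>k\<in>{s..<K}. if k < s then a else b) = b ^ (K - s)" by simp
  finally show ?thesis .
qed

lemma distinct_count:
  assumes finNs: "finite Ns" and N: "card Ns = N" "N > 0" and sK: "s \<le> K"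
  shows "(\<Sum>\<tau>\<in>PiE {0..<t} (\<lambda>_. demands Ns K). card {\<tau> i k | i k. i \<in> {0..<t} \<and> k \<in> {0..<s}})
       = N * ((N ^ K) ^ t - ((N - 1) ^ s * N ^ (K - s)) ^ t)"
proof -
  define D where "D = demands Ns K"
  define T where "T = PiE {0..<t} (\<lambda>_. D)"
  define U where "U = (\<lambda>\<tau>::nat\<Rightarrow>nat\<Rightarrow>nat. {\<tau> i k | i k. i \<in> {0..<t} \<and> k \<in> {0..<s}})"
  have finD: "finite D" unfolding D_def by (rule finite_demands[OF finNs])
  have finT: "finite T" unfolding T_def using finD by (intro finite_PiE) auto
  have cT: "card T = (N ^ K) ^ t" unfolding T_def D_def
    using card_demands[OF finNs] N by (simp add: card_PiE)
  have UNs: "U \<tau> \<subseteq> Ns" if "\<tau> \<in> T" for \<tau>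
  proof
    fix n assume "n \<in> U \<tau>"
    then obtain i k where "i < t" "k < s" "n = \<tau> i k" unfolding U_def by auto
    thus "n \<in> Ns" using that sK unfolding T_def D_def demands_def by (auto simp: PiE_iff)
  qed
  have "(\<Sum>\<tau>\<in>T. card (U \<tau>)) = (\<Sum>\<tau>\<in>T. \<Sum>n\<in>Ns. if n \<in> U \<tau> then 1 else 0)"
  proof (rule sum.cong[OF refl])
    fix \<tau> assume "\<tau> \<in> T"
    hence "U \<tau> = {n\<in>Ns. n \<in> U \<tau>}" using UNs by auto
    hence "card (U \<tau>) = card {n\<in>Ns. n \<in> U \<tau>}" by simp
    also have "\<dots> = (\<Sum>n\<in>Ns. if n \<in> U \<tau> then 1 else 0)"
      using finNs by (simp add: sum.If_cases Int_def)
    finally show "card (U \<tau>) = (\<Sum>n\<in>Ns. if n \<in> U \<tau> then 1 else 0)" .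
  qed
  also have "\<dots> = (\<Sum>n\<in>Ns. \<Sum>\<tau>\<in>T. if n \<in> U \<tau> then 1 else 0)" by (rule sum.swap)
  also have "\<dots> = (\<Sum>n\<in>Ns. card T - ((N - 1) ^ s * N ^ (K - s)) ^ t)"
  proof (rule sum.cong[OF refl])
    fix n assume nN: "n \<in> Ns"
    define Dn where "Dn = PiE {0..<K} (\<lambda>k. if k < s then Ns - {n} else Ns)"
    have eq: "{\<tau>\<in>T. n \<notin> U \<tau>} = PiE {0..<t} (\<lambda>_. Dn)"
    proof (intro set_eqI iffI)
      fix \<tau> assume "\<tau> \<in> {\<tau>\<in>T. n \<notin> U \<tau>}"
      hence a: "\<tau> \<in> T" "\<And>i k. i < t \<Longrightarrow> k < s \<Longrightarrow> \<tau> i k \<noteq> n" unfolding U_def by auto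
      show "\<tau> \<in> PiE {0..<t} (\<lambda>_. Dn)"
        using a unfolding T_def Dn_def D_def demands_def by (auto simp: PiE_iff)
    next
      fix \<tau> assume a: "\<tau> \<in> PiE {0..<t} (\<lambda>_. Dn)"
      have "\<tau> \<in> T" using a unfolding T_def Dn_def D_def demands_def by (auto simp: PiE_iff split: if_splits)
      moreover have "n \<notin> U \<tau>"
      proof
        assume "n \<in> U \<tau>"
        then obtain i k where ik: "i < t" "k < s" "n = \<tau> i k" unfolding U_def by auto
        have "\<tau> i \<in> Dn" using PiE_mem[OF a, of i] ik by simp
        have kK: "k \<in> {0..<K}" using ik sK by simp
        have "\<tau> i k \<in> (if k < s then Ns - {n} else Ns)"
          using PiE_mem[OF \<open>\<tau> i \<in> Dn\<close>[unfolded Dn_def] kK] .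
        thus False using ik by simp
      qed
      ultimately show "\<tau> \<in> {\<tau>\<in>T. n \<notin> U \<tau>}" by simp
    qed
    have cDn: "card Dn = (N - 1) ^ s * N ^ (K - s)"
    proof -
      have "card Dn = (\<Prod>k\<in>{0..<K}. if k < s then N - 1 else N)"
        unfolding Dn_def by (simp add: card_PiE if_distrib N nN finNs cong: if_cong)
      thus ?thesis using prod_split[OF sK] by simp
    qed
    have "(\<Sum>\<tau>\<in>T. if n \<in> U \<tau> then 1 else 0) = card {\<tau>\<in>T. n \<in> U \<tau>}"
      using finT by (simp add: sum.If_cases Int_def)
    also have "{\<tau>\<in>T. n \<in> U \<tau>} = T - {\<tau>\<in>T. n \<notin> U \<tau>}" by auto
    also have "card \<dots> = card T - card {\<tau>\<in>T. n \<notin> U \<tau>}"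
      by (rule card_Diff_subset) (use finT in auto)
    also have "card {\<tau>\<in>T. n \<notin> U \<tau>} = card Dn ^ t" unfolding eq by (simp add: card_PiE)
    finally show "(\<Sum>\<tau>\<in>T. if n \<in> U \<tau> then 1 else 0) = card T - ((N - 1) ^ s * N ^ (K - s)) ^ t"
      using cDn by simp
  qed
  also have "\<dots> = N * ((N ^ K) ^ t - ((N - 1) ^ s * N ^ (K - s)) ^ t)" using N cT by simp
  finally show ?thesis unfolding T_def U_def D_def .
qed



lemma distinct_lb:
  assumes finNs: "finite Ns" and N: "card Ns = N" "N > 0" and sK: "s \<le> K" and st: "s * t \<le> N"
  shows "real (card (PiE {0..<t} (\<lambda>_. demands Ns K))) * (real (s * t) / 2)
    \<le> real (\<Sum>\<tau>\<in>PiE {0..<t} (\<lambda>_. demands Ns K). card {\<tau> i k | i k. i \<in> {0..<t} \<and> k \<in> {0..<s}})"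
proof -
  define a where "a = (N ^ K) ^ t"
  define b where "b = ((N - 1) ^ s * N ^ (K - s)) ^ t"
  define q where "q = 1 - 1 / real N"
  define x where "x = s * t"
  have cT: "card (PiE {0..<t} (\<lambda>_. demands Ns K)) = a"
    unfolding a_def using card_demands[OF finNs] N by (simp add: card_PiE)
  have ba: "b \<le> a" unfolding a_def b_def
  proof (rule power_mono)
    have "(N - 1) ^ s * N ^ (K - s) \<le> N ^ s * N ^ (K - s)" by (simp add: power_mono)
    also have "\<dots> = N ^ K" using sK by (simp add: power_add[symmetric])
    finally show "(N - 1) ^ s * N ^ (K - s) \<le> N ^ K" .
  qed simp
  have rN1: "real (N - 1) = q * real N" unfolding q_def using N by (simp add: of_nat_diff field_simps)
  have rb: "real b = q ^ x * real a"
  proof -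
    have "real ((N - 1) ^ s * N ^ (K - s)) = q ^ s * (real N ^ s * real N ^ (K - s))"
      using rN1 by (simp add: power_mult_distrib)
    also have "real N ^ s * real N ^ (K - s) = real N ^ K" using sK by (simp add: power_add[symmetric])
    finally have h: "real ((N - 1) ^ s * N ^ (K - s)) = q ^ s * real N ^ K" .
    have "real b = (real ((N - 1) ^ s * N ^ (K - s))) ^ t" unfolding b_def by (simp only: of_nat_power)
    also have "\<dots> = (q ^ s * real N ^ K) ^ t" using h by simp
    also have "\<dots> = q ^ x * real a" unfolding x_def a_def by (simp add: power_mult power_mult_distrib)
    finally show ?thesis .
  qed
  have q0: "0 \<le> 1 / real N" "1 / real N \<le> 1" using N by auto
  have pb: "q ^ x \<le> 1 - real x * (1 / real N) + (real x * (1 / real N))^2 / 2"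
    unfolding q_def by (rule pow_bound[OF q0])
  have xN: "real x \<le> real N" unfolding x_def using st by (simp only: of_nat_le_iff)
  have key: "real x / 2 \<le> real N * (1 - q ^ x)"
  proof -
    have "real N * (1 - q ^ x) \<ge> real N * (real x * (1 / real N) - (real x * (1 / real N))^2 / 2)"
      using pb N by (intro mult_left_mono) auto
    moreover have "real N * (real x * (1 / real N) - (real x * (1 / real N))^2 / 2) = real x - real x * (real x / real N) / 2"
      using N by (simp add: field_simps power2_eq_square)
    moreover have "real x / real N \<le> 1" using xN N by simp
    hence "real x * (real x / real N) \<le> real x * 1" by (intro mult_left_mono) auto
    hence "real x * (real x / real N) / 2 \<le> real x / 2" by simp
    ultimately show ?thesis by linarith
  qed
  have "real (\<Sum>\<tau>\<in>PiE {0..<t} (\<lambda>_. demands Ns K). card {\<tau> i k | i k. i \<in> {0..<t} \<and> k \<in> {0..<s}})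
      = real N * (real a - real b)"
    unfolding distinct_count[OF finNs N sK] a_def[symmetric] b_def[symmetric] using ba by (simp add: of_nat_diff)
  also have "\<dots> = real a * (real N * (1 - q ^ x))" unfolding rb by (simp add: algebra_simps)
  moreover have "real a * (real x / 2) \<le> real a * (real N * (1 - q ^ x))"
    using key by (intro mult_left_mono) auto
  ultimately show ?thesis unfolding cT x_def[symmetric] by simp
qed

lemma caseII:
  assumes ach: "achievable_exp_rate M {1..N} K r" and N: "N > 0" and M: "M \<ge> 0"
    and s: "1 \<le> s" "s \<le> K" and t: "1 \<le> t" and st: "s * t \<le> N"
  shows "real s / 2 - real s * M / real t \<le> r"
proof -
  define Ns where "Ns = {1..N}"
  define D where "D = demands Ns K"
  define T where "T = PiE {0..<t} (\<lambda>_. D)"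
  define U where "U = (\<lambda>\<tau>::nat\<Rightarrow>nat\<Rightarrow>nat. {\<tau> i k | i k. i \<in> {0..<t} \<and> k \<in> {0..<s}})"
  have finNs: "finite Ns" and cNs: "card Ns = N" unfolding Ns_def by auto
  have finD: "finite D" unfolding D_def by (rule finite_demands[OF finNs])
  have cD: "card D > 0" unfolding D_def using card_demands[OF finNs, of K] cNs N by simp
  have finT: "finite T" unfolding T_def using finD by (intro finite_PiE) auto
  have cT: "card T = card D * card D ^ (t - 1)" unfolding T_def using t
    by (simp add: card_PiE power_Suc[symmetric])
  define \<epsilon> where "\<epsilon> = 1 / (2 * real t * real s)"
  obtain F0 where F0: "\<forall>F\<ge>F0. \<exists>phi L psi mu. valid_scheme M Ns K F phi L psi \<and>
        (\<forall>d\<in>D. \<forall>k<K. err_prob Ns F phi psi mu d k \<le> \<epsilon>) \<and>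
        expected_rate Ns K F L \<le> r"
  proof -
    have "\<epsilon> > 0" unfolding \<epsilon>_def using s t by simp
    hence "\<exists>F0. \<forall>F\<ge>F0. \<exists>phi L psi mu. valid_scheme M Ns K F phi L psi \<and>
        (\<forall>d\<in>D. \<forall>k<K. err_prob Ns F phi psi mu d k \<le> \<epsilon>) \<and>
        expected_rate Ns K F L \<le> r"
      using ach unfolding achievable_exp_rate_def Ns_def D_def by blast
    thus ?thesis using that by blast
  qed
  show ?thesis
  proof (rule lim_lemma[where b = "(real s + 1) / real t" and Fz = F0])
    show "0 \<le> (real s + 1) / real t" by simp
    fix F :: nat assume FF0: "F \<ge> F0" and Fpos: "F > 0"
    obtain phi L psi mu where vs: "valid_scheme M Ns K F phi L psi"
      and err: "\<forall>d\<in>D. \<forall>k<K. err_prob Ns F phi psi mu d k \<le> \<epsilon>"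
      and er: "expected_rate Ns K F L \<le> r"
      using F0 FF0 by blast
    have per: "real (card (U \<tau>)) * real F \<le> (\<Sum>i\<in>{0..<t}. real (L (\<tau> i))) + (M * real F + 1) * real s + 1"
      if \<tau>T: "\<tau> \<in> T" for \<tau>
    proof -
      have \<tau>D: "\<And>i. i \<in> {0..<t} \<Longrightarrow> \<tau> i \<in> D" using \<tau>T unfolding T_def by auto
      have c: "card (U \<tau>) * F \<le> (\<Sum>i\<in>{0..<t}. L (\<tau> i)) + (nat \<lfloor>M * real F\<rfloor> + 1) * card {0..<s} + 1"
        unfolding U_def
      proof (rule core[OF _ finNs vs])
        show "finite {0..<t}" by simp
        show "\<And>i. i \<in> {0..<t} \<Longrightarrow> \<tau> i \<in> demands Ns K" using \<tau>D unfolding D_def by blast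
        show "{0..<s} \<subseteq> {0..<K}" using s by auto
        show "\<And>i k. i \<in> {0..<t} \<Longrightarrow> k \<in> {0..<s} \<Longrightarrow> err_prob Ns F phi psi mu (\<tau> i) k \<le> \<epsilon>"
          using err \<tau>D s by auto
        show "2 * real (card {0..<t}) * real (card {0..<s}) * \<epsilon> \<le> 1" unfolding \<epsilon>_def using s t by simp
      qed
      have c3: "real (card (U \<tau>) * F) \<le> real ((\<Sum>i\<in>{0..<t}. L (\<tau> i)) + (nat \<lfloor>M * real F\<rfloor> + 1) * card {0..<s} + 1)"
        using c by (simp only: of_nat_le_iff)
      have c4: "real ((\<Sum>i\<in>{0..<t}. L (\<tau> i)) + (nat \<lfloor>M * real F\<rfloor> + 1) * card {0..<s} + 1)
          = (\<Sum>i\<in>{0..<t}. real (L (\<tau> i))) + (real (nat \<lfloor>M * real F\<rfloor>) + 1) * real s + 1"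
        by (simp add: of_nat_sum algebra_simps)
      have "real (nat \<lfloor>M * real F\<rfloor>) \<le> M * real F" by (rule nat_floor_le) (use M in simp)
      hence "(real (nat \<lfloor>M * real F\<rfloor>) + 1) * real s \<le> (M * real F + 1) * real s"
        by (intro mult_right_mono) auto
      thus ?thesis using c3 c4 by simp
    qed
    have "real (card T) * (real (s * t) / 2) * real F \<le> real (\<Sum>\<tau>\<in>T. card (U \<tau>)) * real F"
      using distinct_lb[OF finNs cNs N s(2) st] Fpos unfolding T_def D_def U_def
      by (intro mult_right_mono) auto
    also have "\<dots> = (\<Sum>\<tau>\<in>T. real (card (U \<tau>)) * real F)" by (simp add: sum_distrib_right)
    also have "\<dots> \<le> (\<Sum>\<tau>\<in>T. (\<Sum>i\<in>{0..<t}. real (L (\<tau> i))) + ((M * real F + 1) * real s + 1))"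
      by (rule sum_mono) (use per in \<open>simp add: add.assoc\<close>)
    also have "\<dots> = (\<Sum>i\<in>{0..<t}. \<Sum>\<tau>\<in>T. real (L (\<tau> i))) + real (card T) * ((M * real F + 1) * real s + 1)"
      by (simp add: sum.distrib sum.swap[of _ T])
    also have "(\<Sum>i\<in>{0..<t}. \<Sum>\<tau>\<in>T. real (L (\<tau> i))) = real t * (real (card D ^ (t - 1)) * (\<Sum>d\<in>D. real (L d)))"
    proof -
      have "(\<Sum>i\<in>{0..<t}. \<Sum>\<tau>\<in>T. real (L (\<tau> i))) = (\<Sum>i\<in>{0..<t}. real (card D ^ (t - 1)) * (\<Sum>d\<in>D. real (L d)))"
      proof (rule sum.cong[OF refl])
        fix i assume "i \<in> {0..<t}"
        thus "(\<Sum>\<tau>\<in>T. real (L (\<tau> i))) = real (card D ^ (t - 1)) * (\<Sum>d\<in>D. real (L d))"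
          unfolding T_def using sum_PiE_coord[of "{0..<t}" i D "\<lambda>d. real (L d)"] finD by simp
      qed
      thus ?thesis by simp
    qed
    finally have ineq: "real (card T) * (real (s * t) / 2) * real F
        \<le> real t * (real (card D ^ (t - 1)) * (\<Sum>d\<in>D. real (L d))) + real (card T) * ((M * real F + 1) * real s + 1)" .
    define P where "P = real (card D ^ (t - 1))"
    define X where "X = (\<Sum>d\<in>D. real (L d))"
    define Dr where "Dr = real (card D)"
    have Ppos: "P > 0" unfolding P_def using cD by simp
    have Drpos: "Dr > 0" unfolding Dr_def using cD by simp
    have cTr: "real (card T) = Dr * P" unfolding cT Dr_def P_def by simp
    have ineq2: "P * (Dr * (real s * real t / 2) * real F) \<le> P * (real t * X + Dr * ((M * real F + 1) * real s + 1))"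
      using ineq unfolding cTr X_def[symmetric] P_def[symmetric] by (simp add: algebra_simps)
    hence ineq3: "Dr * (real s * real t / 2) * real F \<le> real t * X + Dr * ((M * real F + 1) * real s + 1)"
      using Ppos by simp
    have tpos: "real t > 0" using t by simp
    have Frpos: "real F > 0" using Fpos by simp
    have "real s / 2 - real s * M / real t - (real s + 1) / real t / real F
        = (Dr * (real s * real t / 2) * real F - Dr * ((M * real F + 1) * real s + 1)) / (real t * (real F * Dr))"
      using tpos Frpos Drpos by (simp add: field_simps)
    also have "\<dots> \<le> (real t * X) / (real t * (real F * Dr))"
      by (rule divide_right_mono) (use ineq3 tpos Frpos Drpos in auto)
    also have "\<dots> = X / (real F * Dr)" using tpos by simp
    also have "\<dots> = expected_rate Ns K F L" unfolding expected_rate_eq X_def Dr_def D_def ..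
    finally show "real s / 2 - real s * M / real t - (real s + 1) / real t / real F \<le> r" using er by linarith
  qed
qed



lemma take_drop_concat:
  assumes "\<forall>x\<in>set xs. length x = F" "k < length xs"
  shows "take F (drop (k * F) (concat xs)) = xs ! k"
  using assms
proof (induction xs arbitrary: k)
  case Nil then show ?case by simp
next
  case (Cons x xs)
  show ?case
  proof (cases k)
    case 0 then show ?thesis using Cons by simp
  next
    case (Suc j)
    have "drop (k * F) (concat (x # xs)) = drop (j * F) (concat xs)"
      using Cons.prems Suc by (simp add: add.commute)
    then show ?thesis using Cons Suc by simp
  qed
qed

lemma achievable_K:
  assumes M: "M \<ge> 0"
  shows "achievable_exp_rate M Ns K (real K)"
  unfolding achievable_exp_rate_def
proof (intro allI impI)
  fix \<epsilon> :: real assume eps: "\<epsilon> > 0"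
  show "\<exists>F0. \<forall>F\<ge>F0. \<exists>phi L psi mu. valid_scheme M Ns K F phi L psi \<and>
          (\<forall>d\<in>demands Ns K. \<forall>k<K. err_prob Ns F phi psi mu d k \<le> \<epsilon>) \<and>
          expected_rate Ns K F L \<le> real K"
  proof (rule exI[of _ 0], intro allI impI)
    fix F :: nat
    define phi :: "nat \<Rightarrow> (nat \<Rightarrow> bool list) \<Rightarrow> bool list" where "phi = (\<lambda>k W. [])"
    define L :: "(nat \<Rightarrow> nat) \<Rightarrow> nat" where "L = (\<lambda>d. K * F)"
    define psi :: "(nat \<Rightarrow> nat) \<Rightarrow> (nat \<Rightarrow> bool list) \<Rightarrow> bool list"
      where "psi = (\<lambda>d W. concat (map (\<lambda>k. W (d k)) [0..<K]))"
    define mu :: "(nat \<Rightarrow> nat) \<Rightarrow> nat \<Rightarrow> bool list \<Rightarrow> bool list \<Rightarrow> bool list"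
      where "mu = (\<lambda>d k m c. take F (drop (k * F) m))"
    have lenW: "length (W (d k)) = F" if "d \<in> demands Ns K" "W \<in> file_tuples Ns F" "k < K" for d W k
    proof -
      have "d k \<in> Ns" using that unfolding demands_def by auto
      thus ?thesis using that unfolding file_tuples_def by auto
    qed
    have vs: "valid_scheme M Ns K F phi L psi"
      unfolding valid_scheme_def
    proof (intro conjI ballI allI impI)
      fix k W show "real (length (phi k W)) \<le> M * real F" unfolding phi_def using M by simp
    next
      fix d W assume "d \<in> demands Ns K" "W \<in> file_tuples Ns F"
      hence "\<forall>x\<in>set (map (\<lambda>k. W (d k)) [0..<K]). length x = F" using lenW by auto
      hence "map length (map (\<lambda>k. W (d k)) [0..<K]) = map (\<lambda>_. F) [0..<K]"
        by (simp add: map_eq_conv)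
      hence "length (concat (map (\<lambda>k. W (d k)) [0..<K])) = sum_list (map (\<lambda>_. F) [0..<K])"
        by (simp only: length_concat)
      also have "\<dots> = K * F" by (simp add: sum_list_triv)
      finally show "length (psi d W) = L d" unfolding psi_def L_def .
    qed
    have err: "err_prob Ns F phi psi mu d k \<le> \<epsilon>" if "d \<in> demands Ns K" "k < K" for d k
    proof -
      have e: "{W \<in> file_tuples Ns F. mu d k (psi d W) (phi k W) \<noteq> W (d k)} = {}"
      proof -
        { fix W assume W: "W \<in> file_tuples Ns F"
          hence "\<forall>x\<in>set (map (\<lambda>k. W (d k)) [0..<K]). length x = F" using lenW that by auto
          hence "mu d k (psi d W) (phi k W) = W (d k)"
            unfolding mu_def psi_def using take_drop_concat[of "map (\<lambda>k. W (d k)) [0..<K]" F k] that by simp }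
        thus ?thesis by auto
      qed
      show ?thesis unfolding err_prob_def e using eps by simp
    qed
    have er: "expected_rate Ns K F L \<le> real K"
    proof -
      have "\<And>d. real (L d) / real F \<le> real K"
        unfolding L_def by (cases "F = 0") auto
      hence "(\<Sum>d\<in>demands Ns K. real (L d) / real F) \<le> real (card (demands Ns K)) * real K"
        using sum_mono[of "demands Ns K" "\<lambda>d. real (L d) / real F" "\<lambda>_. real K"] by simp
      thus ?thesis unfolding expected_rate_def
        by (cases "card (demands Ns K) = 0") (auto simp: divide_le_eq mult.commute)
    qed
    show "\<exists>phi L psi mu. valid_scheme M Ns K F phi L psi \<and>
          (\<forall>d\<in>demands Ns K. \<forall>k<K. err_prob Ns F phi psi mu d k \<le> \<epsilon>) \<and>
          expected_rate Ns K F L \<le> real K"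
      using vs err er by blast
  qed
qed

lemma achievable_nonneg:
  assumes "achievable_exp_rate M Ns K r"
  shows "0 \<le> r"
proof -
  obtain F0 where "\<forall>F\<ge>F0. \<exists>phi L psi mu. valid_scheme M Ns K F phi L psi \<and>
        (\<forall>d\<in>demands Ns K. \<forall>k<K. err_prob Ns F phi psi mu d k \<le> 1) \<and> expected_rate Ns K F L \<le> r"
    using assms zero_less_one unfolding achievable_exp_rate_def by blast
  then obtain phi L psi mu where "expected_rate Ns K F0 L \<le> r" by blast
  moreover have "0 \<le> expected_rate Ns K F0 L" unfolding expected_rate_def
    by (intro divide_nonneg_nonneg sum_nonneg) auto
  ultimately show ?thesis by linarith
qed

lemma Rfun_le:
  assumes N: "N > 0" and M: "0 < M" "M \<le> real N"
  shows "Rfun M N K \<le> (1 - M / real N) * min (real K) (min (real N) (real N / M))"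
proof -
  define x where "x = M / real N"
  have x: "0 < x" "x \<le> 1" unfolding x_def using N M by auto
  define A where "A = real N / M * (1 - (1 - x) ^ K)"
  have R: "Rfun M N K = (1 - x) * min A (real N)" unfolding Rfun_def A_def x_def using M by simp
  have "1 - real K * x \<le> (1 - x) ^ K" using Bernoulli_inequality[of "-x" K] x by simp
  hence "A \<le> real N / M * (real K * x)" unfolding A_def using M N by (intro mult_left_mono) auto
  also have "\<dots> = real K" unfolding x_def using M N by simp
  finally have AK: "A \<le> real K" .
  have "(1 - x) ^ K \<ge> 0" using x by simp
  hence "1 - (1 - x) ^ K \<le> 1" by simp
  hence AN: "A \<le> real N / M" unfolding A_def using M N by (intro mult_left_le) auto
  have "min A (real N) \<le> min (real K) (min (real N) (real N / M))" using AK AN by auto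
  hence "(1 - x) * min A (real N) \<le> (1 - x) * min (real K) (min (real N) (real N / M))"
    using x by (intro mult_left_mono) auto
  thus ?thesis unfolding R x_def .
qed



lemma div_lb: assumes "t > 0" shows "real N / real t - 1 < real (N div t)"
proof -
  have "N = N div t * t + N mod t" by simp
  hence "real N = real (N div t) * real t + real (N mod t)" by (metis of_nat_add of_nat_mult)
  moreover have "real (N mod t) < real t" using assms by simp
  ultimately have "real N < (real (N div t) + 1) * real t" by (simp add: algebra_simps)
  hence "real N / real t < real (N div t) + 1" using assms by (simp add: divide_less_eq)
  thus ?thesis by linarith
qed

lemma rate_lb:
  fixes M :: real and N K :: nat
  assumes M: "M \<ge> 0" and N: "N > 0" and K: "K > 0"
    and ach: "achievable_exp_rate M {1..N} K r"
  shows "Rfun M N K / 72 \<le> r"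
proof (cases "M \<ge> real N")
  case True
  hence "Rfun M N K = 0" unfolding Rfun_def using N by auto
  thus ?thesis using achievable_nonneg[OF ach] by simp
next
  case False
  hence MN: "M < real N" by simp
  have Rmin: "Rfun M N K \<le> min (real K) (real N)"
  proof (cases "M = 0")
    case True thus ?thesis unfolding Rfun_def by simp
  next
    case False
    hence "Rfun M N K \<le> (1 - M / real N) * min (real K) (min (real N) (real N / M))"
      using Rfun_le[OF N _ less_imp_le[OF MN], of K] M False by simp
    also have "\<dots> \<le> 1 * min (real K) (min (real N) (real N / M))"
      using M MN N by (intro mult_right_mono) auto
    finally show ?thesis by simp
  qed
  show ?thesis
  proof (cases "K \<le> 72 \<or> N \<le> 72 \<or> (M > 0 \<and> real N \<le> 72 * M)")
    case True
    have lb: "(real N - M) / real N \<le> r" by (rule caseI[OF ach N K M])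
    have "Rfun M N K \<le> 72 * (1 - M / real N)"
    proof (cases "M = 0")
      case True
      thus ?thesis unfolding Rfun_def using \<open>K \<le> 72 \<or> N \<le> 72 \<or> (M > 0 \<and> real N \<le> 72 * M)\<close> by auto
    next
      case False
      hence Mp: "M > 0" using M by simp
      have "real K \<le> 72 \<or> real N \<le> 72 \<or> real N / M \<le> 72"
        using True Mp by (auto simp: divide_le_eq)
      hence "min (real K) (min (real N) (real N / M)) \<le> 72" by linarith
      moreover have "0 \<le> 1 - M / real N" using MN N by simp
      ultimately have "(1 - M / real N) * min (real K) (min (real N) (real N / M)) \<le> (1 - M / real N) * 72"
        by (intro mult_left_mono)
      hence "Rfun M N K \<le> (1 - M / real N) * 72"
        using Rfun_le[OF N Mp less_imp_le[OF MN], of K] by linarith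
      thus ?thesis by (simp add: algebra_simps)
    qed
    moreover have "(real N - M) / real N = 1 - M / real N" using N by (simp add: field_simps)
    ultimately show ?thesis using lb by simp
  next
    case False
    hence K72: "K > 72" and N72: "N > 72" and M72: "M = 0 \<or> 72 * M < real N" using M by auto
    define t where "t = (if M \<le> 1/4 then 1 else nat \<lceil>4 * M\<rceil>)"
    define s where "s = min K (N div t)"
    have tbig: "real t = real_of_int \<lceil>4*M\<rceil> \<and> 1 \<le> t \<and> 4 * M \<le> real t \<and> real t < 4 * M + 1" if nm: "\<not> M \<le> 1/4"
    proof -
      have c0: "1 \<le> \<lceil>4*M\<rceil>" using nm by simp
      have tt: "t = nat \<lceil>4*M\<rceil>" unfolding t_def using nm by simp
      have r: "real t = real_of_int \<lceil>4*M\<rceil>" unfolding tt using c0 by (simp add: of_nat_nat)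
      moreover have "1 \<le> t" unfolding tt using c0 by linarith
      moreover have "4 * M \<le> real t" "real t < 4 * M + 1" unfolding r using ceiling_correct[of "4*M"] by linarith+
      ultimately show ?thesis by blast
    qed
    have t1: "t \<ge> 1" using tbig unfolding t_def by (cases "M \<le> 1/4") auto
    have Mt: "M / real t \<le> 1/4"
    proof (cases "M \<le> 1/4")
      case True thus ?thesis unfolding t_def by simp
    next
      case False
      hence "real t \<ge> 4 * M" using tbig by blast
      thus ?thesis using False by (simp add: divide_le_eq)
    qed
    have Nt: "real N \<ge> 9 * real t"
    proof (cases "M \<le> 1/4")
      case True thus ?thesis unfolding t_def using N72 by simp
    next
      case False
      hence tM: "real t < 4 * M + 1" using tbig by blast
      have "72 * M < real N" using M72 False by auto
      thus ?thesis using tM False by linarith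
    qed
    have s1: "s \<ge> 1"
    proof -
      have "t \<le> N" using Nt t1 by linarith
      hence "N div t \<ge> 1" using t1 by (simp add: div_greater_zero_iff Suc_le_eq)
      thus ?thesis unfolding s_def using K by simp
    qed
    have sK: "s \<le> K" unfolding s_def by simp
    have st: "s * t \<le> N" unfolding s_def
      by (meson div_times_less_eq_dividend le_trans min.cobounded2 mult_le_cancel2)
    have lb: "real s / 2 - real s * M / real t \<le> r" by (rule caseII[OF ach N M s1 sK t1 st])
    have "real s * M / real t = real s * (M / real t)" by simp
    also have "\<dots> \<le> real s * (1/4)" using Mt by (intro mult_left_mono) auto
    finally have lb2: "real s / 4 \<le> r" using lb by simp
    have "Rfun M N K \<le> 18 * real s"
    proof (cases "s = K")
      case True thus ?thesis using Rmin by simp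
    next
      case False
      hence sdef: "s = N div t" unfolding s_def by auto
      show ?thesis
      proof (cases "M \<le> 1/4")
        case True
        hence "t = 1" unfolding t_def by simp
        thus ?thesis using Rmin sdef by simp
      next
        case Mbig: False
        hence tM: "real t < 4 * M + 1" and t4: "real t \<ge> 4 * M" using tbig by blast+
        have Mp: "M > 0" using Mbig by simp
        have NM: "72 * M < real N" using M72 Mbig by auto
        have "real s > real N / real t - 1" unfolding sdef by (rule div_lb) (use t1 in simp)
        moreover have "real N / real t \<ge> real N / (8 * M)"
          using tM Mbig t1 by (intro divide_left_mono) auto
        ultimately have s8: "real s > real N / (8 * M) - 1" by linarith
        have "real N / M > 72" using NM Mp by (simp add: less_divide_eq)
        hence "real N / (8 * M) - 1 \<ge> real N / M / 9" by (simp add: field_simps)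
        hence sM: "real s \<ge> real N / M / 9" using s8 by linarith
        have "Rfun M N K \<le> (1 - M / real N) * min (real K) (min (real N) (real N / M))"
          using Rfun_le[OF N Mp less_imp_le[OF MN], of K] .
        also have "\<dots> \<le> 1 * (real N / M)"
          using Mp MN N by (intro mult_mono) auto
        finally show ?thesis using sM by simp
      qed
    qed
    thus ?thesis using lb2 by simp
  qed
qed

theorem claim1:
  fixes M :: real and N K :: nat
  assumes "M \<ge> 0" and "N > 0" and "K > 0"
  shows "Rfun M N K \<le> 72 * Rbar M {1..N} K"
proof -
  have ne: "{r. achievable_exp_rate M {1..N} K r} \<noteq> {}"
    using achievable_K[OF assms(1)] by blast
  have "Rfun M N K / 72 \<le> Inf {r. achievable_exp_rate M {1..N} K r}"
    by (rule cInf_greatest[OF ne]) (use rate_lb[OF assms] in blast)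
  thus ?thesis unfolding Rbar_def by simp
qed

end
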